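(* Let $A\in\mathbb{R}^{n\times n}$ and $T>0$. Suppose that for $x\in\mathbb{R}^n$, $W(x,T)=0$ (the zero matrix) implies $x=0$. Then the FTCSP $$\text{minimize } h_T(p)\quad\text{subject to } p\in X_T\cap\Delta$$ has a unique optimal solution, both for $h_T=f_T$ and for $h_T=g_T$.
   Context: For $T>0$ and $i=1,\dots,n$ let $e_i$ be the $i$-th standard basis vector of $\mathbb{R}^n$ and $W_i(T):=\int_0^T e^{At}e_ie_i^\top e^{A^\top t}\,dt$. For $p=(p_i)\in\mathbb{R}^n$ put $W(p,T):=\sum_{i=1}^n p_iW_i(T)$. Define $X_T:=\{p\in\mathbb{R}^n : W(p,T)\succ 0\}$ and $\Delta:=\{p\in\mathbb{R}^n:\sum_i p_i=1,\ p_i\ge 0\ \forall i\}$. On $X_T$ define $f_T(p):=-\log\det W(p,T)$ and $g_T(p):=\operatorname{tr}(W(p,T)^{-1})$. *)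

theory Defs
  imports "HOL-Analysis.Analysis"
begin

primrec mat_pow :: "real^'n^'n \<Rightarrow> nat \<Rightarrow> real^'n^'n" where
  "mat_pow M 0 = mat 1"
| "mat_pow M (Suc k) = M ** mat_pow M k"

definition mat_exp :: "real^'n^'n \<Rightarrow> real^'n^'n" where
  "mat_exp M = (\<Sum>k. (1 / fact k) *\<^sub>R mat_pow M k)"

definition outer :: "real^'n \<Rightarrow> real^'n \<Rightarrow> real^'n^'n" where
  "outer u v = (\<chi> j k. u $ j * v $ k)"

definition pos_def :: "real^'n^'n \<Rightarrow> bool" where
  "pos_def M \<longleftrightarrow> transpose M = M \<and> (\<forall>x. x \<noteq> 0 \<longrightarrow> x \<bullet> (M *v x) > 0)"

definition Wi :: "real^'n^'n \<Rightarrow> 'n \<Rightarrow> real \<Rightarrow> real^'n^'n" where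
  "Wi A i T = integral {0..T}
     (\<lambda>t. mat_exp (t *\<^sub>R A) ** outer (axis i 1) (axis i 1) ** mat_exp (t *\<^sub>R transpose A))"

definition Wp :: "real^'n^'n \<Rightarrow> real^'n \<Rightarrow> real \<Rightarrow> real^'n^'n" where
  "Wp A p T = (\<Sum>i\<in>UNIV. p $ i *\<^sub>R Wi A i T)"

definition XT :: "real^'n^'n \<Rightarrow> real \<Rightarrow> (real^'n) set" where
  "XT A T = {p. pos_def (Wp A p T)}"

definition std_simplex :: "(real^'n) set" where
  "std_simplex = {p. (\<Sum>i\<in>UNIV. p $ i) = 1 \<and> (\<forall>i. p $ i \<ge> 0)}"

definition fT :: "real^'n^'n \<Rightarrow> real \<Rightarrow> real^'n \<Rightarrow> real" where
  "fT A T p = - ln (det (Wp A p T))"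

definition gT :: "real^'n^'n \<Rightarrow> real \<Rightarrow> real^'n \<Rightarrow> real" where
  "gT A T p = trace (matrix_inv (Wp A p T))"

end

theory Submission
  imports Defs
begin


definition psd :: "real^'n^'n \<Rightarrow> bool" where
  "psd M \<longleftrightarrow> transpose M = M \<and> (\<forall>x. 0 \<le> x \<bullet> (M *v x))"

lemma sym_inner:
  fixes M :: "real^'n^'n"
  assumes "transpose M = M" shows "x \<bullet> (M *v y) = y \<bullet> (M *v x)"
  by (metis assms dot_lmul_matrix inner_commute transpose_matrix_vector)

lemma quad_ineq:
  fixes a b c :: real
  assumes "\<And>t. 0 \<le> a + 2*t*b + t^2*c" and "0 \<le> c"
  shows "b^2 \<le> a*c"
proof (cases "c = 0")
  case True
  have "b = 0"
  proof (rule ccontr)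
    assume "b \<noteq> 0"
    have "0 \<le> a + 2*(-(\<bar>a\<bar>+1)/(2*b))*b + (-(\<bar>a\<bar>+1)/(2*b))^2*c" by (rule assms)
    also have "\<dots> = a - (\<bar>a\<bar>+1)" using \<open>b \<noteq> 0\<close> True by (simp add: field_simps)
    finally show False by linarith
  qed
  then show ?thesis using True by simp
next
  case False
  then have cp: "c > 0" using assms(2) by simp
  have "0 \<le> a + 2*(-b/c)*b + (-b/c)^2*c" by (rule assms)
  also have "\<dots> = a - b^2/c" using cp by (simp add: field_simps power2_eq_square)
  finally have "b^2/c \<le> a" by simp
  then show ?thesis using cp by (simp add: field_simps)
qed

lemma psd_cs:
  fixes M :: "real^'n^'n"
  assumes "psd M"
  shows "(x \<bullet> (M *v y))^2 \<le> (x \<bullet> (M *v x)) * (y \<bullet> (M *v y))"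
proof -
  have sym: "transpose M = M" and pos: "\<And>z. 0 \<le> z \<bullet> (M *v z)" using assms by (auto simp: psd_def)
  have "\<And>t. 0 \<le> x \<bullet> (M *v x) + 2*t*(x \<bullet> (M *v y)) + t^2*(y \<bullet> (M *v y))"
  proof -
    fix t :: real
    have "0 \<le> (x + t *\<^sub>R y) \<bullet> (M *v (x + t *\<^sub>R y))" by (rule pos)
    also have "\<dots> = x \<bullet> (M *v x) + 2*t*(x \<bullet> (M *v y)) + t^2*(y \<bullet> (M *v y))"
      using sym_inner[OF sym, of y x]
      by (simp add: matrix_vector_right_distrib matrix_vector_mult_scaleR inner_add_left inner_add_right power2_eq_square algebra_simps)
    finally show "0 \<le> x \<bullet> (M *v x) + 2*t*(x \<bullet> (M *v y)) + t^2*(y \<bullet> (M *v y))" .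
  qed
  then show ?thesis using quad_ineq pos by blast
qed

lemma axis_inner: "axis i 1 \<bullet> (v::real^'n) = v$i"
  by (simp add: inner_commute inner_axis)

lemma mat_axis_comp: "((M::real^'n^'n) *v axis j 1) $ i = M$i$j"
  by (simp add: matrix_vector_mult_def axis_def if_distrib cong: if_cong)

lemma axis_quad: "axis i 1 \<bullet> ((M::real^'n^'n) *v axis j 1) = M$i$j"
  by (simp add: axis_inner mat_axis_comp)

lemma psd_diag_zero:
  fixes M :: "real^'n^'n"
  assumes "psd M" "M$i$i = 0" shows "M$i$j = 0" "M$j$i = 0"
proof -
  have "(M$i$j)^2 \<le> M$i$i * M$j$j" using psd_cs[OF assms(1), of "axis i 1" "axis j 1"] by (simp add: axis_quad)
  then show "M$i$j = 0" using assms(2) by simp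
  moreover have "transpose M = M" using assms(1) by (simp add: psd_def)
  ultimately show "M$j$i = 0" by (metis transpose_def vec_lambda_beta)
qed

lemma psd_diag_nonneg: "psd (M::real^'n^'n) \<Longrightarrow> 0 \<le> M$i$i"
  by (metis axis_quad psd_def)

lemma outer_mult_vec: "outer u w *v x = (w \<bullet> x) *\<^sub>R u"
  by (simp add: vec_eq_iff outer_def matrix_vector_mult_def inner_vec_def sum_distrib_left mult.commute mult.left_commute)

lemma outer_quad: "x \<bullet> (outer u w *v x) = (x \<bullet> u) * (w \<bullet> x)"
  by (simp add: outer_mult_vec)

lemma outer_mult_right: "outer u w ** C = outer u (transpose C *v w)"
  by (simp add: vec_eq_iff outer_def matrix_matrix_mult_def matrix_vector_mult_def transpose_def sum_distrib_left mult.commute mult.left_commute)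

lemma outer_mult_left: "C ** outer u w = outer (C *v u) w"
  by (simp add: vec_eq_iff outer_def matrix_matrix_mult_def matrix_vector_mult_def sum_distrib_right sum_distrib_left algebra_simps)

lemma transpose_outer: "transpose (outer u w) = outer w u"
  by (simp add: vec_eq_iff outer_def transpose_def mult.commute)

lemma transpose_add: "transpose (A + B) = transpose A + transpose (B::real^'n^'n)"
  by (simp add: vec_eq_iff transpose_def)

lemma transpose_diff: "transpose (A - B) = transpose A - transpose (B::real^'n^'n)"
  by (simp add: vec_eq_iff transpose_def)

lemma mm_add_rdistrib: "((B::real^'n^'n) + C) ** A = B ** A + C ** A"
  by (simp add: vec_eq_iff matrix_matrix_mult_def sum.distrib algebra_simps)

lemma mm_diff_rdistrib: "((B::real^'n^'n) - C) ** A = B ** A - C ** A"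
  by (simp add: vec_eq_iff matrix_matrix_mult_def sum_subtractf algebra_simps)

lemma mm_diff_ldistrib: "(A::real^'n^'n) ** (B - C) = A ** B - A ** C"
  by (simp add: vec_eq_iff matrix_matrix_mult_def sum_subtractf algebra_simps)

lemma det_rank1: fixes u w :: "real^'n" shows "det (mat 1 + outer u w) = 1 + u \<bullet> w"
proof (cases "u = 0")
  case True
  then have "outer u w = 0" by (simp add: outer_def vec_eq_iff)
  then show ?thesis using True by simp
next
  case False
  then obtain k where uk: "u$k \<noteq> 0" by (auto simp: vec_eq_iff)
  define C :: "real^'n^'n" where "C = (\<chi> i j. if j = k then u$i else (mat 1::real^'n^'n)$i$j)"
  have dC: "det C = u$k"
    using cramer_lemma[of k "mat 1 :: real^'n^'n" u] unfolding matrix_vector_mul_lid C_def by simp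
  define z where "z = transpose C *v w"
  have Cax: "C *v axis k 1 = u"
    by (simp add: vec_eq_iff mat_axis_comp C_def)
  have eq: "(mat 1 + outer u w) ** C = C ** (mat 1 + outer (axis k 1) z)"
    by (simp add: matrix_add_ldistrib mm_add_rdistrib outer_mult_right outer_mult_left Cax z_def)
  have tr: "transpose (mat 1 + outer (axis k 1) z) = (\<chi> i j. if j = k then (axis k 1 + z)$i else (mat 1::real^'n^'n)$i$j)"
    by (simp add: vec_eq_iff transpose_def outer_def mat_def axis_def)
  have d2: "det (mat 1 + outer (axis k 1) z) = 1 + z$k"
  proof -
    have "det (transpose (mat 1 + outer (axis k 1) z)) = (axis k 1 + z)$k * det (mat 1::real^'n^'n)"
      using cramer_lemma[of k "mat 1::real^'n^'n" "axis k 1 + z"] unfolding matrix_vector_mul_lid tr .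
    then show ?thesis by (simp add: axis_def)
  qed
  have zk: "z$k = u \<bullet> w"
    by (simp add: z_def matrix_vector_mult_def transpose_def C_def inner_vec_def mult.commute)
  have "det (mat 1 + outer u w) * det C = det C * (1 + u \<bullet> w)"
    using eq d2 zk by (metis det_mul)
  then show ?thesis using dC uk by simp
qed



lemma inv_props:
  fixes Q :: "real^'n^'n"
  assumes "invertible Q"
  shows "Q ** matrix_inv Q = mat 1" "matrix_inv Q ** Q = mat 1"
proof -
  have "Q ** matrix_inv Q = mat 1 \<and> matrix_inv Q ** Q = mat 1"
    using assms unfolding invertible_def matrix_inv_def by (rule someI_ex)
  then show "Q ** matrix_inv Q = mat 1" "matrix_inv Q ** Q = mat 1" by auto
qed

lemma pd_quad_pos: "pos_def Q \<Longrightarrow> x \<noteq> 0 \<Longrightarrow> 0 < x \<bullet> (Q *v x)"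
  by (simp add: pos_def_def)

lemma pd_sym: "pos_def Q \<Longrightarrow> transpose Q = Q"
  by (simp add: pos_def_def)

lemma pd_invertible:
  fixes Q :: "real^'n^'n"
  assumes "pos_def Q" shows "invertible Q"
proof -
  have "inj ((*v) Q)"
  proof (rule injI)
    fix x y assume "Q *v x = Q *v y"
    then have "Q *v (x - y) = 0" by (simp add: matrix_vector_mult_diff_distrib)
    then have "(x - y) \<bullet> (Q *v (x - y)) = 0" by simp
    then show "x = y" using pd_quad_pos[OF assms, of "x - y"] by (cases "x = y") auto
  qed
  then show ?thesis
    using matrix_left_invertible_injective invertible_left_inverse by blast
qed

lemma continuous_on_det:
  fixes F :: "'a::topological_space \<Rightarrow> real^'n^'n"
  assumes "continuous_on S F"
  shows "continuous_on S (\<lambda>x. det (F x))"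
  unfolding det_def
  by (intro continuous_intros assms)

lemma scaleR_mv: "((c::real) *\<^sub>R (A::real^'n^'n)) *v x = c *\<^sub>R (A *v x)"
  by (metis matrix_scaleR_vector_ac matrix_vector_mult_scaleR)

lemma pd_det_pos:
  fixes Q :: "real^'n^'n"
  assumes "pos_def Q" shows "0 < det Q"
proof (rule ccontr)
  assume "\<not> 0 < det Q"
  define F where "F = (\<lambda>s::real. det ((1 - s) *\<^sub>R mat 1 + s *\<^sub>R Q))"
  have cF: "continuous_on {0..1} F"
    unfolding F_def by (intro continuous_on_det continuous_intros)
  have F0: "F 0 = 1" by (simp add: F_def)
  have F1: "F 1 \<le> 0" using \<open>\<not> 0 < det Q\<close> by (simp add: F_def)
  obtain s where s: "0 \<le> s" "s \<le> 1" "F s = 0"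
    using IVT2'[of F 1 0 0] cF F0 F1 by auto
  have pd: "pos_def ((1 - s) *\<^sub>R mat 1 + s *\<^sub>R Q)"
    unfolding pos_def_def
  proof (intro conjI allI impI)
    show "transpose ((1 - s) *\<^sub>R mat 1 + s *\<^sub>R Q) = (1 - s) *\<^sub>R mat 1 + s *\<^sub>R Q"
      using pd_sym[OF assms] by (simp add: transpose_add transpose_scalar transpose_mat)
    fix x :: "real^'n" assume "x \<noteq> 0"
    have a: "0 < x \<bullet> x" using \<open>x \<noteq> 0\<close> by simp
    have b: "0 < x \<bullet> (Q *v x)" using pd_quad_pos[OF assms \<open>x \<noteq> 0\<close>] .
    have "x \<bullet> (((1 - s) *\<^sub>R mat 1 + s *\<^sub>R Q) *v x) = (1 - s) * (x \<bullet> x) + s * (x \<bullet> (Q *v x))"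
      by (simp add: matrix_vector_mult_add_rdistrib scaleR_mv inner_add_right)
    also have "\<dots> > 0"
    proof (cases "s = 1")
      case True then show ?thesis using b by simp
    next
      case False then show ?thesis using a b s by (smt (verit) mult_nonneg_nonneg mult_pos_pos)
    qed
    finally show "0 < x \<bullet> (((1 - s) *\<^sub>R mat 1 + s *\<^sub>R Q) *v x)" .
  qed
  have "det ((1 - s) *\<^sub>R mat 1 + s *\<^sub>R Q) \<noteq> 0"
    using pd_invertible[OF pd] invertible_det_nz by blast
  then show False using s(3) by (simp add: F_def)
qed



lemma det_update:
  fixes Q :: "real^'n^'n" assumes "invertible Q"
  shows "det (Q + outer v v) = det Q * (1 + (matrix_inv Q *v v) \<bullet> v)"
proof -
  have "Q + outer v v = Q ** (mat 1 + outer (matrix_inv Q *v v) v)"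
    using inv_props[OF assms] by (simp add: matrix_add_ldistrib outer_mult_left matrix_vector_mul_assoc)
  then show ?thesis by (simp add: det_mul det_rank1)
qed

lemma pd_inv_quad:
  fixes Q :: "real^'n^'n"
  assumes "pos_def Q" "v \<noteq> 0" shows "0 < (matrix_inv Q *v v) \<bullet> v"
proof -
  define y where "y = matrix_inv Q *v v"
  have Qy: "Q *v y = v" using inv_props(1)[OF pd_invertible[OF assms(1)]]
    by (simp add: y_def matrix_vector_mul_assoc)
  have "y \<noteq> 0" using Qy assms(2) by auto
  then have "0 < y \<bullet> (Q *v y)" by (rule pd_quad_pos[OF assms(1)])
  then show ?thesis using Qy by (simp add: y_def)
qed

lemma pd_inv_quad_nonneg:
  fixes Q :: "real^'n^'n"
  assumes "pos_def Q" shows "0 \<le> (matrix_inv Q *v v) \<bullet> v"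
  using pd_inv_quad[OF assms, of v] by (cases "v = 0") auto

lemma pd_add_psd:
  fixes Q M :: "real^'n^'n"
  assumes "pos_def Q" "psd M" shows "pos_def (Q + M)"
  unfolding pos_def_def
proof (intro conjI allI impI)
  show "transpose (Q + M) = Q + M" using assms by (simp add: transpose_add pd_sym psd_def)
  fix x :: "real^'n" assume "x \<noteq> 0"
  have "0 < x \<bullet> (Q *v x)" using pd_quad_pos[OF assms(1) \<open>x \<noteq> 0\<close>] .
  moreover have "0 \<le> x \<bullet> (M *v x)" using assms(2) by (simp add: psd_def)
  ultimately show "0 < x \<bullet> ((Q + M) *v x)" by (simp add: matrix_vector_mult_add_rdistrib inner_add_right)
qed

lemma psd_outer: "psd (outer v v)"
  unfolding psd_def by (simp add: transpose_outer outer_quad inner_commute)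

lemma det_psd_mono_aux:
  fixes M Q :: "real^'n^'n"
  shows "card {i. M$i$i \<noteq> 0} = m \<Longrightarrow> psd M \<Longrightarrow> pos_def Q \<Longrightarrow>
     det Q \<le> det (Q + M) \<and> (M \<noteq> 0 \<longrightarrow> det Q < det (Q + M))"
proof (induction m arbitrary: M Q rule: less_induct)
  case (less m)
  show ?case
  proof (cases "M = 0")
    case True then show ?thesis by simp
  next
    case False
    have psdM: "psd M" by (rule less.prems(2))
    obtain i where Mi: "M$i$i \<noteq> 0"
    proof (rule ccontr)
      assume "\<not> thesis"
      then have "\<forall>i. M$i$i = 0" using that by blast
      then have "M = 0" using psd_diag_zero(1)[OF psdM] by (simp add: vec_eq_iff)
      then show False using False by simp
    qed
    have Mip: "0 < M$i$i" using psd_diag_nonneg[OF psdM, of i] Mi by simp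
    define s where "s = sqrt (M$i$i)"
    have sp: "0 < s" using Mip by (simp add: s_def)
    have ss: "s * s = M$i$i" using Mip by (simp add: s_def)
    define v where "v = (1 / s) *\<^sub>R (M *v axis i 1)"
    define M' where "M' = M - outer v v"
    have vj: "\<And>j. v$j = M$j$i / s" by (simp add: v_def mat_axis_comp)
    have sym: "transpose M = M" using psdM by (simp add: psd_def)
    have vi: "v $ i \<noteq> 0" using vj Mi sp by simp
    then have v0: "v \<noteq> 0" by auto
    have psdM': "psd M'"
      unfolding psd_def
    proof (intro conjI allI)
      show "transpose M' = M'" by (simp add: M'_def transpose_diff transpose_outer sym)
      fix x :: "real^'n"
      have xv: "x \<bullet> v = (x \<bullet> (M *v axis i 1)) / s" by (simp add: v_def)
      have cs: "(x \<bullet> (M *v axis i 1))^2 \<le> (x \<bullet> (M *v x)) * M$i$i"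
        using psd_cs[OF psdM, of x "axis i 1"] by (simp add: axis_quad)
      have "(x \<bullet> v)^2 = (x \<bullet> (M *v axis i 1))^2 / M$i$i"
        using xv ss by (simp add: power_divide power2_eq_square)
      also have "\<dots> \<le> x \<bullet> (M *v x)" using cs Mip by (simp add: divide_le_eq)
      finally have "(x \<bullet> v)^2 \<le> x \<bullet> (M *v x)" .
      then show "0 \<le> x \<bullet> (M' *v x)"
        by (simp add: M'_def matrix_vector_mult_diff_rdistrib inner_diff_right outer_quad inner_commute power2_eq_square)
    qed
    have fin: "finite {j. M$j$j \<noteq> 0}" by simp
    have sub: "{j. M'$j$j \<noteq> 0} \<subseteq> {j. M$j$j \<noteq> 0} - {i}"
    proof
      fix j assume "j \<in> {j. M'$j$j \<noteq> 0}"
      then have j: "M$j$j - v$j * v$j \<noteq> 0" by (simp add: M'_def outer_def)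
      have "j \<noteq> i"
      proof
        assume "j = i"
        then have "M$j$j - v$j * v$j = M$i$i - M$i$i * M$i$i / (s * s)" by (simp add: vj)
        also have "\<dots> = 0" using ss Mi by simp
        finally show False using j by simp
      qed
      moreover have "M$j$j \<noteq> 0"
      proof
        assume "M$j$j = 0"
        then have "M$j$i = 0" using psd_diag_zero(1)[OF psdM] by blast
        then show False using j \<open>M$j$j = 0\<close> by (simp add: vj)
      qed
      ultimately show "j \<in> {j. M$j$j \<noteq> 0} - {i}" by simp
    qed
    have card: "card {j. M'$j$j \<noteq> 0} < m"
    proof -
      have "card {j. M'$j$j \<noteq> 0} \<le> card ({j. M$j$j \<noteq> 0} - {i})"
        using sub by (intro card_mono) auto
      also have "\<dots> < card {j. M$j$j \<noteq> 0}"
        using Mi by (intro card_Diff1_less) auto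
      finally show ?thesis using less.prems(1) by simp
    qed
    have pdQ: "pos_def Q" by (rule less.prems(3))
    have pdQ1: "pos_def (Q + outer v v)" by (rule pd_add_psd[OF pdQ psd_outer])
    have IH: "det (Q + outer v v) \<le> det ((Q + outer v v) + M')"
      using less.IH[OF card refl psdM' pdQ1] by blast
    have eq: "(Q + outer v v) + M' = Q + M" by (simp add: M'_def)
    have "det (Q + outer v v) = det Q * (1 + (matrix_inv Q *v v) \<bullet> v)"
      by (rule det_update[OF pd_invertible[OF pdQ]])
    moreover have "0 < (matrix_inv Q *v v) \<bullet> v" by (rule pd_inv_quad[OF pdQ v0])
    moreover have "0 < det Q" by (rule pd_det_pos[OF pdQ])
    ultimately have "det Q < det (Q + outer v v)" by (simp add: algebra_simps)
    then show ?thesis using IH eq by simp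
  qed
qed

lemma det_psd_mono:
  fixes M Q :: "real^'n^'n"
  assumes "psd M" "pos_def Q" "M \<noteq> 0"
  shows "det Q < det (Q + M)"
  using det_psd_mono_aux[OF refl assms(1,2)] assms(3) by blast

lemma inv_sym:
  fixes P :: "real^'n^'n"
  assumes "pos_def P" shows "transpose (matrix_inv P) = matrix_inv P"
proof -
  define Pi where "Pi = matrix_inv P"
  have PPi: "P ** Pi = mat 1" "Pi ** P = mat 1" using inv_props[OF pd_invertible[OF assms]] by (auto simp: Pi_def)
  have "transpose Pi ** P = mat 1"
    using arg_cong[OF PPi(1), of transpose] pd_sym[OF assms] by (simp add: matrix_transpose_mul transpose_mat)
  then have "transpose Pi = transpose Pi ** (P ** Pi)" using PPi by simp
  also have "\<dots> = Pi" by (simp add: matrix_mul_assoc \<open>transpose Pi ** P = mat 1\<close>)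
  finally show ?thesis by (simp add: Pi_def)
qed



lemma pd_psd: "pos_def (Q::real^'n^'n) \<Longrightarrow> psd Q"
  unfolding psd_def by (metis inner_zero_left matrix_vector_mult_0_right order_refl pd_quad_pos pd_sym order.strict_implies_order)

lemma exists_col_nz:
  fixes E :: "real^'n^'n"
  assumes "E \<noteq> 0" shows "\<exists>j. E *v axis j 1 \<noteq> 0"
proof (rule ccontr)
  assume "\<not> ?thesis"
  then have "\<forall>j i. E$i$j = 0" by (metis mat_axis_comp zero_index)
  then have "E = 0" by (simp add: vec_eq_iff)
  then show False using assms by simp
qed

lemma logdet_mid:
  fixes P Q :: "real^'n^'n"
  assumes pdP: "pos_def P" and pdQ: "pos_def Q" and ne: "P \<noteq> Q"
  shows "det P * det Q < (det ((1/2) *\<^sub>R (P + Q)))^2"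
proof -
  define Pi where "Pi = matrix_inv P"
  define M where "M = (1/2) *\<^sub>R (P + Q)"
  define E where "E = (1/2) *\<^sub>R (P - Q)"
  have PPi: "P ** Pi = mat 1" "Pi ** P = mat 1" using inv_props[OF pd_invertible[OF pdP]] by (auto simp: Pi_def)
  have ME: "M = P - E" unfolding M_def E_def by (simp add: vec_eq_iff algebra_simps)
  have QE: "P - E - E = Q" unfolding E_def by (simp add: vec_eq_iff algebra_simps)
  have "M ** Pi ** M = (P - E) ** Pi ** (P - E)" by (simp add: ME)
  also have "\<dots> = (mat 1 - E ** Pi) ** (P - E)" by (simp add: mm_diff_rdistrib PPi)
  also have "\<dots> = (P - E) - (E ** Pi ** P - E ** Pi ** E)"
    by (simp add: mm_diff_rdistrib mm_diff_ldistrib)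
  also have "\<dots> = (P - E - E) + E ** Pi ** E"
    by (simp add: PPi flip: matrix_mul_assoc)
  finally have key: "M ** Pi ** M = Q + E ** Pi ** E" using QE by simp
  define N where "N = E ** Pi ** E"
  have symE: "transpose E = E" using pd_sym[OF pdP] pd_sym[OF pdQ] by (simp add: E_def transpose_scalar transpose_diff)
  have symPi: "transpose Pi = Pi" using inv_sym[OF pdP] by (simp add: Pi_def)
  have quadN: "\<And>x. x \<bullet> (N *v x) = (matrix_inv P *v (E *v x)) \<bullet> (E *v x)"
  proof -
    fix x :: "real^'n"
    have "x \<bullet> (N *v x) = x \<bullet> (E *v (Pi *v (E *v x)))" by (simp add: N_def matrix_vector_mul_assoc matrix_mul_assoc)
    also have "\<dots> = (Pi *v (E *v x)) \<bullet> (E *v x)" using sym_inner[OF symE] by simp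
    finally show "x \<bullet> (N *v x) = (matrix_inv P *v (E *v x)) \<bullet> (E *v x)" by (simp add: Pi_def)
  qed
  have psdN: "psd N"
    unfolding psd_def
  proof (intro conjI allI)
    show "transpose N = N" by (simp add: N_def matrix_transpose_mul symE symPi matrix_mul_assoc)
    fix x :: "real^'n" show "0 \<le> x \<bullet> (N *v x)" using quadN pd_inv_quad_nonneg[OF pdP] by simp
  qed
  have "E \<noteq> 0" using ne by (simp add: E_def)
  then obtain j where "E *v axis j 1 \<noteq> 0" using exists_col_nz by blast
  then have "0 < axis j 1 \<bullet> (N *v axis j 1)" using quadN pd_inv_quad[OF pdP] by simp
  then have N0: "N \<noteq> 0" by auto
  have "det Q < det (Q + N)" by (rule det_psd_mono[OF psdN pdQ N0])
  also have "\<dots> = det M * det Pi * det M" using key unfolding N_def by (metis det_mul)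
  finally have lt: "det Q < det M * det Pi * det M" .
  have dP: "det P * det Pi = 1" using arg_cong[OF PPi(1), of det] by (simp add: det_mul)
  have pP: "0 < det P" by (rule pd_det_pos[OF pdP])
  have "det P * det Q < det P * (det M * det Pi * det M)" using lt pP by simp
  also have "\<dots> = (det P * det Pi) * (det M)^2" by (simp add: power2_eq_square algebra_simps)
  finally show ?thesis using dP by (simp add: M_def)
qed

lemma var_identity:
  fixes X :: "real^'n^'n"
  assumes pdX: "pos_def X"
  shows "y \<bullet> (matrix_inv X *v y) - (2*(y \<bullet> z) - z \<bullet> (X *v z))
        = (z - matrix_inv X *v y) \<bullet> (X *v (z - matrix_inv X *v y))"
proof -
  define u where "u = matrix_inv X *v y"
  have Xu: "X *v u = y" using inv_props(1)[OF pd_invertible[OF pdX]] by (simp add: u_def matrix_vector_mul_assoc)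
  have s: "u \<bullet> (X *v z) = z \<bullet> (X *v u)" by (rule sym_inner[OF pd_sym[OF pdX]])
  show ?thesis
    unfolding u_def[symmetric]
    using s Xu by (simp add: matrix_vector_mult_diff_distrib inner_diff_left inner_diff_right inner_commute)
qed

lemma trace_quad: "trace (A::real^'n^'n) = (\<Sum>j\<in>UNIV. axis j 1 \<bullet> (A *v axis j 1))"
  by (simp add: trace_def axis_quad)

lemma trinv_mid:
  fixes P Q :: "real^'n^'n"
  assumes pdP: "pos_def P" and pdQ: "pos_def Q" and ne: "P \<noteq> Q"
  shows "2 * trace (matrix_inv ((1/2) *\<^sub>R (P + Q))) < trace (matrix_inv P) + trace (matrix_inv Q)"
proof -
  define M where "M = (1/2) *\<^sub>R (P + Q)"
  have psdQ: "psd ((1/2) *\<^sub>R Q)"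
    using pd_psd[OF pdQ] unfolding psd_def by (simp add: transpose_scalar scaleR_mv)
  have pdP2: "pos_def ((1/2) *\<^sub>R P)"
    unfolding pos_def_def using pd_sym[OF pdP] pd_quad_pos[OF pdP] by (simp add: transpose_scalar scaleR_mv)
  have pdM: "pos_def M" unfolding M_def using pd_add_psd[OF pdP2 psdQ] by (simp add: scaleR_add_right)
  define z where "z = (\<lambda>j. matrix_inv M *v axis j 1)"
  have Mz: "\<And>j. M *v z j = axis j 1" using inv_props(1)[OF pd_invertible[OF pdM]] by (simp add: z_def matrix_vector_mul_assoc)
  have each: "\<And>j. 2 * (axis j 1 \<bullet> (matrix_inv M *v axis j 1))
      = (2*(axis j 1 \<bullet> z j) - z j \<bullet> (P *v z j)) + (2*(axis j 1 \<bullet> z j) - z j \<bullet> (Q *v z j))"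
  proof -
    fix j
    have "z j \<bullet> (M *v z j) = (1/2) * (z j \<bullet> (P *v z j)) + (1/2) * (z j \<bullet> (Q *v z j))"
      by (simp add: M_def scaleR_mv matrix_vector_mult_add_rdistrib inner_add_right)
    then show "2 * (axis j 1 \<bullet> (matrix_inv M *v axis j 1))
      = (2*(axis j 1 \<bullet> z j) - z j \<bullet> (P *v z j)) + (2*(axis j 1 \<bullet> z j) - z j \<bullet> (Q *v z j))"
      using Mz[of j] by (simp add: z_def inner_commute)
  qed
  have le: "\<And>X y w. pos_def X \<Longrightarrow> 2*(y \<bullet> w) - w \<bullet> ((X::real^'n^'n) *v w) \<le> y \<bullet> (matrix_inv X *v y)"
  proof -
    fix X :: "real^'n^'n" and y w assume pX: "pos_def X"
    have "0 \<le> (w - matrix_inv X *v y) \<bullet> (X *v (w - matrix_inv X *v y))"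
      using pd_quad_pos[OF pX, of "w - matrix_inv X *v y"] by (cases "w - matrix_inv X *v y = 0") auto
    then show "2*(y \<bullet> w) - w \<bullet> (X *v w) \<le> y \<bullet> (matrix_inv X *v y)"
      using var_identity[OF pX, of y w] by simp
  qed
  have lt: "\<And>X y w. pos_def X \<Longrightarrow> X *v w \<noteq> y \<Longrightarrow> 2*(y \<bullet> w) - w \<bullet> ((X::real^'n^'n) *v w) < y \<bullet> (matrix_inv X *v y)"
  proof -
    fix X :: "real^'n^'n" and y w assume pX: "pos_def X" and ne: "X *v w \<noteq> y"
    have "w - matrix_inv X *v y \<noteq> 0"
    proof
      assume "w - matrix_inv X *v y = 0"
      then have "X *v w = (X ** matrix_inv X) *v y" by (simp add: matrix_vector_mul_assoc)
      then show False using ne inv_props(1)[OF pd_invertible[OF pX]] by simp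
    qed
    then have "0 < (w - matrix_inv X *v y) \<bullet> (X *v (w - matrix_inv X *v y))"
      by (rule pd_quad_pos[OF pX])
    then show "2*(y \<bullet> w) - w \<bullet> (X *v w) < y \<bullet> (matrix_inv X *v y)"
      using var_identity[OF pX, of y w] by simp
  qed
  have exj: "\<exists>j. P *v z j \<noteq> axis j 1 \<or> Q *v z j \<noteq> axis j 1"
  proof (rule ccontr)
    assume "\<not> ?thesis"
    then have h: "\<And>j. P *v z j = axis j 1 \<and> Q *v z j = axis j 1" by blast
    have "P ** matrix_inv M = Q ** matrix_inv M"
    proof -
      have "\<And>j. (P ** matrix_inv M) *v axis j 1 = (Q ** matrix_inv M) *v axis j 1"
        using h by (simp add: z_def flip: matrix_vector_mul_assoc)
      then show ?thesis by (metis mat_axis_comp vec_eq_iff)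
    qed
    then have "P ** matrix_inv M ** M = Q ** matrix_inv M ** M" by simp
    then have "P = Q" using inv_props(2)[OF pd_invertible[OF pdM]] by (simp flip: matrix_mul_assoc)
    then show False using ne by simp
  qed
  have "(\<Sum>j\<in>UNIV. 2 * (axis j 1 \<bullet> (matrix_inv M *v axis j 1)))
      < (\<Sum>j\<in>UNIV. axis j 1 \<bullet> (matrix_inv P *v axis j 1) + axis j 1 \<bullet> (matrix_inv Q *v axis j 1))"
  proof (rule sum_strict_mono_ex1)
    show "finite (UNIV :: 'n set)" by simp
    show "\<forall>j\<in>UNIV. 2 * (axis j 1 \<bullet> (matrix_inv M *v axis j 1))
        \<le> axis j 1 \<bullet> (matrix_inv P *v axis j 1) + axis j 1 \<bullet> (matrix_inv Q *v axis j 1)"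
      using each le[OF pdP] le[OF pdQ] by (smt (verit))
    obtain j where "P *v z j \<noteq> axis j 1 \<or> Q *v z j \<noteq> axis j 1" using exj by blast
    then have "2 * (axis j 1 \<bullet> (matrix_inv M *v axis j 1))
        < axis j 1 \<bullet> (matrix_inv P *v axis j 1) + axis j 1 \<bullet> (matrix_inv Q *v axis j 1)"
      using each[of j] le[OF pdP, of "axis j 1" "z j"] le[OF pdQ, of "axis j 1" "z j"]
        lt[OF pdP, of "z j" "axis j 1"] lt[OF pdQ, of "z j" "axis j 1"] by linarith
    then show "\<exists>j\<in>UNIV. 2 * (axis j 1 \<bullet> (matrix_inv M *v axis j 1))
        < axis j 1 \<bullet> (matrix_inv P *v axis j 1) + axis j 1 \<bullet> (matrix_inv Q *v axis j 1)" by blast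
  qed
  then show ?thesis by (simp add: trace_quad sum.distrib sum_distrib_left M_def)
qed



lemma mat_pow_scale: "mat_pow (t *\<^sub>R A) k = (t^k) *\<^sub>R mat_pow (A::real^'n^'n) k"
  by (induction k) (simp_all add: matrix_scalar_ac scalar_matrix_assoc[symmetric])

lemma mat_pow_comm: "A ** mat_pow A k = mat_pow (A::real^'n^'n) k ** A"
  by (induction k) (simp_all add: matrix_mul_assoc)

lemma transpose_mat_pow: "transpose (mat_pow A k) = mat_pow (transpose (A::real^'n^'n)) k"
  by (induction k) (simp_all add: matrix_transpose_mul transpose_mat mat_pow_comm)

lemma norm_le_sum_nth: "norm (x::'a::real_normed_vector^'n) \<le> (\<Sum>i\<in>UNIV. norm (x$i))"
  unfolding norm_vec_def by (rule L2_set_le_sum) simp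

definition mnorm_const :: "real^'n^'n \<Rightarrow> real" where
  "mnorm_const A = real CARD('n) * (\<Sum>i\<in>UNIV. \<Sum>l\<in>UNIV. \<bar>A$i$l\<bar>)"

lemma norm_mm_le: "norm ((A::real^'n^'n) ** (Y::real^'n^'n)) \<le> mnorm_const A * norm Y"
proof -
  have ent: "\<And>i j. \<bar>(A ** Y)$i$j\<bar> \<le> (\<Sum>l\<in>UNIV. \<bar>A$i$l\<bar>) * norm Y"
  proof -
    fix i j :: 'n
    have "\<bar>(A ** Y)$i$j\<bar> = \<bar>\<Sum>l\<in>UNIV. A$i$l * Y$l$j\<bar>" by (simp add: matrix_matrix_mult_def)
    also have "\<dots> \<le> (\<Sum>l\<in>UNIV. \<bar>A$i$l\<bar> * \<bar>Y$l$j\<bar>)" by (rule order_trans[OF sum_abs]) (simp add: abs_mult)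
    also have "\<dots> \<le> (\<Sum>l\<in>UNIV. \<bar>A$i$l\<bar> * norm Y)"
    proof (rule sum_mono)
      fix l :: 'n
      have "\<bar>Y$l$j\<bar> \<le> norm (Y$l)" by (rule component_le_norm_cart)
      also have "\<dots> \<le> norm Y" by (rule Finite_Cartesian_Product.norm_nth_le)
      finally show "\<bar>A$i$l\<bar> * \<bar>Y$l$j\<bar> \<le> \<bar>A$i$l\<bar> * norm Y" by (simp add: mult_left_mono)
    qed
    finally show "\<bar>(A ** Y)$i$j\<bar> \<le> (\<Sum>l\<in>UNIV. \<bar>A$i$l\<bar>) * norm Y" by (simp add: sum_distrib_right)
  qed
  have "norm (A ** Y) \<le> (\<Sum>i\<in>UNIV. norm ((A ** Y)$i))"
    by (rule norm_le_sum_nth)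
  also have "\<dots> \<le> (\<Sum>i\<in>UNIV. \<Sum>j\<in>UNIV. \<bar>(A ** Y)$i$j\<bar>)"
    by (intro sum_mono norm_le_l1_cart)
  also have "\<dots> \<le> (\<Sum>i\<in>UNIV. \<Sum>j::'n\<in>UNIV. (\<Sum>l\<in>UNIV. \<bar>A$i$l\<bar>) * norm Y)"
    by (intro sum_mono ent)
  also have "\<dots> = mnorm_const A * norm Y"
    by (simp add: mnorm_const_def sum_distrib_right sum_distrib_left algebra_simps)
  finally show ?thesis .
qed

lemma mnorm_const_nonneg: "0 \<le> mnorm_const A"
  by (simp add: mnorm_const_def sum_nonneg)

lemma norm_mat_pow: "norm (mat_pow (A::real^'n^'n) k) \<le> mnorm_const A ^ k * norm (mat 1 :: real^'n^'n)"
proof (induction k)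
  case 0 then show ?case by simp
next
  case (Suc k)
  have "norm (mat_pow A (Suc k)) \<le> mnorm_const A * norm (mat_pow A k)" by (simp add: norm_mm_le)
  also have "\<dots> \<le> mnorm_const A * (mnorm_const A ^ k * norm (mat 1 :: real^'n^'n))"
    by (rule mult_left_mono[OF Suc.IH mnorm_const_nonneg])
  finally show ?case by simp
qed

definition expterm :: "real^'n^'n \<Rightarrow> nat \<Rightarrow> real \<Rightarrow> real^'n^'n" where
  "expterm A k t = (t^k / fact k) *\<^sub>R mat_pow A k"

lemma mat_exp_series: "mat_exp (t *\<^sub>R A) = suminf (\<lambda>k. expterm A k t)"
  unfolding mat_exp_def expterm_def by (simp add: mat_pow_scale)

lemma expterm_bound:
  fixes A :: "real^'n^'n"
  assumes "\<bar>t\<bar> \<le> R"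
  shows "norm (expterm A k t) \<le> norm (mat 1 :: real^'n^'n) * (inverse (fact k) * (R * mnorm_const A)^k)"
proof -
  have "norm (expterm A k t) = \<bar>t\<bar>^k / fact k * norm (mat_pow A k)"
    by (simp add: expterm_def power_abs)
  also have "\<dots> \<le> R^k / fact k * (mnorm_const A ^ k * norm (mat 1 :: real^'n^'n))"
  proof (rule mult_mono)
    show "\<bar>t\<bar>^k / fact k \<le> R^k / fact k" using assms by (intro divide_right_mono power_mono) auto
    show "norm (mat_pow A k) \<le> mnorm_const A ^ k * norm (mat 1 :: real^'n^'n)" by (rule norm_mat_pow)
    show "0 \<le> R^k / fact k" using assms abs_ge_zero[of t] by (intro divide_nonneg_pos zero_le_power) (linarith, simp)
  qed simp
  also have "\<dots> = norm (mat 1 :: real^'n^'n) * (inverse (fact k) * (R * mnorm_const A)^k)"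
    by (simp add: power_mult_distrib divide_inverse algebra_simps)
  finally show ?thesis .
qed

lemma expterm_summable_bound: "summable (\<lambda>k. norm (mat 1 :: real^'n^'n) * (inverse (fact k) * (R * mnorm_const (A::real^'n^'n))^k))"
  by (intro summable_mult summable_exp)

lemma expterm_summable: "summable (\<lambda>k. expterm (A::real^'n^'n) k t)"
proof (rule summable_comparison_test[OF _ expterm_summable_bound[of "\<bar>t\<bar>" A]])
  show "\<exists>N. \<forall>n\<ge>N. norm (expterm A n t) \<le> norm (mat 1 :: real^'n^'n) * (inverse (fact n) * (\<bar>t\<bar> * mnorm_const A) ^ n)"
    using expterm_bound[of t "\<bar>t\<bar>" A] by auto
qed

lemma continuous_mat_exp: "continuous_on {-R..R} (\<lambda>t. mat_exp (t *\<^sub>R (A::real^'n^'n)))"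
proof -
  have ul: "uniform_limit {-R..R} (\<lambda>n t. \<Sum>i<n. expterm A i t) (\<lambda>t. suminf (\<lambda>i. expterm A i t)) sequentially"
    by (rule Weierstrass_m_test[OF _ expterm_summable_bound[of R A]]) (auto intro!: expterm_bound)
  have "continuous_on {-R..R} (\<lambda>t. suminf (\<lambda>i. expterm A i t))"
    by (rule uniform_limit_theorem[OF _ ul]) (auto simp: expterm_def intro!: always_eventually continuous_intros)
  then show ?thesis by (simp add: mat_exp_series)
qed

lemma mat_exp_zero: "mat_exp (0 *\<^sub>R (A::real^'n^'n)) = mat 1"
proof -
  have "(\<lambda>k. expterm A k 0) = (\<lambda>k. if k = 0 then mat 1 else 0)"
    by (auto simp: expterm_def)
  moreover have "(\<lambda>k::nat. if k = 0 then mat 1 else (0::real^'n^'n)) sums mat 1"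
    using sums_single[of 0 "\<lambda>_. mat 1 :: real^'n^'n"] by simp
  moreover have "mat_exp (0 *\<^sub>R A) = suminf (\<lambda>k. expterm A k 0)" by (rule mat_exp_series)
  ultimately show ?thesis by (simp add: sums_iff)
qed

lemma linear_transpose: "linear (transpose :: real^'n^'n \<Rightarrow> real^'n^'n)"
  by (intro linearI) (simp_all add: transpose_add transpose_scalar)

lemma bl_transpose: "bounded_linear (transpose :: real^'n^'n \<Rightarrow> real^'n^'n)"
  using linear_transpose linear_conv_bounded_linear by blast

lemma transpose_mat_exp: "transpose (mat_exp (t *\<^sub>R (A::real^'n^'n))) = mat_exp (t *\<^sub>R transpose A)"
proof -
  have "transpose (mat_exp (t *\<^sub>R A)) = suminf (\<lambda>k. transpose (expterm A k t))"
    unfolding mat_exp_series by (rule bounded_linear.suminf[OF bl_transpose expterm_summable])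
  also have "\<dots> = suminf (\<lambda>k. expterm (transpose A) k t)"
    by (simp add: expterm_def transpose_scalar transpose_mat_pow)
  finally show ?thesis by (simp add: mat_exp_series)
qed



definition cvec :: "real^'n^'n \<Rightarrow> 'n \<Rightarrow> real \<Rightarrow> real^'n" where
  "cvec A i t = mat_exp (t *\<^sub>R A) *v axis i 1"

lemma integrand_eq:
  "mat_exp (t *\<^sub>R A) ** outer (axis i 1) (axis i 1) ** mat_exp (t *\<^sub>R transpose A)
   = outer (cvec A i t) (cvec A i t)"
  by (simp add: transpose_mat_exp[symmetric] outer_mult_left outer_mult_right cvec_def)

lemma Wi_eq: "Wi A i T = integral {0..T} (\<lambda>t. outer (cvec A i t) (cvec A i t))"
  by (simp add: Wi_def integrand_eq)

lemma cont_mv: "continuous_on S F \<Longrightarrow> continuous_on S (\<lambda>t. (F t :: real^'n^'m) *v v)"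
  unfolding matrix_vector_mult_def by (intro continuous_on_vec_lambda continuous_intros)

lemma cont_outer: "continuous_on S c \<Longrightarrow> continuous_on S (\<lambda>t. outer (c t) (c t :: real^'n))"
  unfolding outer_def by (intro continuous_on_vec_lambda continuous_intros)

lemma cont_cvec: "continuous_on {0..T} (cvec A i)"
proof -
  have "continuous_on {-\<bar>T\<bar>..\<bar>T\<bar>} (\<lambda>t. mat_exp (t *\<^sub>R A))" by (rule continuous_mat_exp)
  then have "continuous_on {0..T} (\<lambda>t. mat_exp (t *\<^sub>R A))"
    by (rule continuous_on_subset) auto
  then show ?thesis unfolding cvec_def[abs_def] by (rule cont_mv)
qed

lemma integrable_W: "(\<lambda>t. outer (cvec A i t) (cvec A i t)) integrable_on {0..T}"
  by (intro integrable_continuous_interval cont_outer cont_cvec)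

lemma bl_quad: "bounded_linear (\<lambda>M::real^'n^'n. x \<bullet> (M *v x))"
proof -
  have "linear (\<lambda>M::real^'n^'n. x \<bullet> (M *v x))"
    by (intro linearI) (simp_all add: matrix_vector_mult_add_rdistrib inner_add_right scaleR_mv)
  then show ?thesis using linear_conv_bounded_linear by blast
qed

lemma Wi_quad: "x \<bullet> (Wi A i T *v x) = integral {0..T} (\<lambda>t. (x \<bullet> cvec A i t)^2)"
proof -
  have "x \<bullet> (Wi A i T *v x) = integral {0..T} ((\<lambda>M. x \<bullet> (M *v x)) \<circ> (\<lambda>t. outer (cvec A i t) (cvec A i t)))"
    unfolding Wi_eq by (rule integral_linear[OF integrable_W bl_quad, symmetric])
  then show ?thesis by (simp add: o_def outer_quad inner_commute power2_eq_square)
qed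

lemma Wi_sym: "transpose (Wi A i T) = Wi A i T"
proof -
  have "transpose (Wi A i T) = integral {0..T} (transpose \<circ> (\<lambda>t. outer (cvec A i t) (cvec A i t)))"
    unfolding Wi_eq by (rule integral_linear[OF integrable_W bl_transpose, symmetric])
  then show ?thesis by (simp add: o_def transpose_outer Wi_eq)
qed

lemma Wp_quad: "(x::real^'n) \<bullet> (Wp A p T *v x) = (\<Sum>i\<in>UNIV. p$i * (x \<bullet> (Wi A i T *v x)))"
proof -
  have l: "linear (\<lambda>M::real^'n^'n. x \<bullet> (M *v x))" using bl_quad bounded_linear.linear by blast
  show ?thesis unfolding Wp_def
    by (simp add: real_vector.linear_sum[OF l] linear_cmul[OF l])
qed

lemma Wp_sym: "transpose (Wp A p T) = Wp A p T"
  unfolding Wp_def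
  by (simp add: real_vector.linear_sum[OF linear_transpose] linear_cmul[OF linear_transpose] Wi_sym)

lemma Wp_diff: "Wp A (p - q) T = Wp A p T - Wp A q T"
  unfolding Wp_def by (simp add: scaleR_diff_left sum_subtractf)

lemma Wp_mid: "Wp A ((1/2) *\<^sub>R (p + q)) T = (1/2) *\<^sub>R (Wp A p T + Wp A q T)"
proof -
  have "\<And>i. ((1/2) *\<^sub>R (p + q))$i *\<^sub>R Wi A i T = (1/2) *\<^sub>R (p$i *\<^sub>R Wi A i T + q$i *\<^sub>R Wi A i T)"
    by (simp add: scaleR_add_left scaleR_add_right)
  then show ?thesis unfolding Wp_def by (simp add: sum.distrib[symmetric] scaleR_sum_right)
qed

lemma Wi_quad_nonneg: "0 \<le> x \<bullet> (Wi A i T *v x)"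
proof (cases "0 \<le> T")
  case True
  have "(\<lambda>t. (x \<bullet> cvec A i t)^2) integrable_on {0..T}"
    by (intro integrable_continuous_interval continuous_intros cont_cvec)
  then show ?thesis unfolding Wi_quad by (rule Henstock_Kurzweil_Integration.integral_nonneg) simp
next
  case False
  then show ?thesis by (simp add: Wi_quad)
qed

lemma psd_Wp: "p \<in> std_simplex \<Longrightarrow> psd (Wp A p T)"
  unfolding psd_def std_simplex_def
  by (auto simp: Wp_sym Wp_quad intro!: sum_nonneg mult_nonneg_nonneg Wi_quad_nonneg)

definition p0 :: "real^'n" where "p0 = (\<chi> i. 1 / real CARD('n))"

lemma p0_simplex: "(p0 :: real^'n) \<in> std_simplex"
  by (simp add: p0_def std_simplex_def)

lemma p0_pd:
  assumes "0 < T"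
  shows "pos_def (Wp A (p0::real^'n) T)"
  unfolding pos_def_def
proof (intro conjI allI impI)
  show "transpose (Wp A p0 T) = Wp A p0 T" by (rule Wp_sym)
  fix x :: "real^'n" assume "x \<noteq> 0"
  define g where "g = (\<lambda>t. \<Sum>i\<in>UNIV. (x \<bullet> cvec A i t)^2)"
  have int: "\<And>i. (\<lambda>t. (x \<bullet> cvec A i t)^2) integrable_on {0..T}"
    by (intro integrable_continuous_interval continuous_intros cont_cvec)
  have "x \<bullet> (Wp A p0 T *v x) = (\<Sum>i\<in>UNIV. (1 / real CARD('n)) * integral {0..T} (\<lambda>t. (x \<bullet> cvec A i t)^2))"
    by (simp add: Wp_quad Wi_quad p0_def)
  also have "\<dots> = (1 / real CARD('n)) * integral {0..T} g"
    unfolding g_def by (simp add: integral_sum[OF _ int] sum_distrib_left)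
  finally have eq: "x \<bullet> (Wp A p0 T *v x) = (1 / real CARD('n)) * integral {0..T} g" .
  have cg: "continuous_on {0..T} g" unfolding g_def by (intro continuous_intros cont_cvec)
  have gnn: "\<And>t. 0 \<le> g t" unfolding g_def by (simp add: sum_nonneg)
  have g0: "g 0 = x \<bullet> x"
  proof -
    have "\<And>i. cvec A i 0 = axis i 1" using mat_exp_zero[of A] by (simp add: cvec_def)
    then have "g 0 = (\<Sum>i\<in>UNIV. x$i * x$i)" by (simp add: g_def inner_axis power2_eq_square)
    then show ?thesis by (simp add: inner_vec_def)
  qed
  have "0 < g 0" using g0 \<open>x \<noteq> 0\<close> by simp
  have ge: "0 \<le> integral {0..T} g"
    by (rule Henstock_Kurzweil_Integration.integral_nonneg[OF integrable_continuous_interval[OF cg]]) (simp add: gnn)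
  have ne: "integral {0..T} g \<noteq> 0"
  proof
    assume "integral {0..T} g = 0"
    then have "\<forall>t\<in>cbox 0 T. g t = 0"
      using integral_cbox_eq_0_iff[of 0 T g] cg gnn assms by auto
    then show False using \<open>0 < g 0\<close> assms by auto
  qed
  show "0 < x \<bullet> (Wp A p0 T *v x)" using eq ge ne by simp
qed



lemma psd_det_pd:
  fixes M :: "real^'n^'n"
  assumes "psd M" "det M \<noteq> 0" shows "pos_def M"
  unfolding pos_def_def
proof (intro conjI allI impI)
  show "transpose M = M" using assms(1) by (simp add: psd_def)
  fix x :: "real^'n" assume "x \<noteq> 0"
  have ge: "0 \<le> x \<bullet> (M *v x)" using assms(1) by (simp add: psd_def)
  show "0 < x \<bullet> (M *v x)"
  proof (rule ccontr)
    assume "\<not> 0 < x \<bullet> (M *v x)"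
    then have z: "x \<bullet> (M *v x) = 0" using ge by simp
    have "((M *v x) \<bullet> (M *v x))^2 \<le> ((M *v x) \<bullet> (M *v (M *v x))) * (x \<bullet> (M *v x))"
      using psd_cs[OF assms(1), of "M *v x" x] by simp
    then have "M *v x = 0" using z by simp
    moreover have "inj ((*v) M)"
      using assms(2) invertible_det_nz inj_matrix_vector_mult by blast
    ultimately show False using \<open>x \<noteq> 0\<close> by (metis injD matrix_vector_mult_0_right)
  qed
qed

lemma pd_mid:
  fixes P Q :: "real^'n^'n"
  assumes "pos_def P" "pos_def Q" shows "pos_def ((1/2) *\<^sub>R (P + Q))"
proof -
  have psdQ: "psd ((1/2) *\<^sub>R Q)"
    using pd_psd[OF assms(2)] unfolding psd_def by (simp add: transpose_scalar scaleR_mv)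
  have pdP2: "pos_def ((1/2) *\<^sub>R P)"
    unfolding pos_def_def using pd_sym[OF assms(1)] pd_quad_pos[OF assms(1)] by (simp add: transpose_scalar scaleR_mv)
  show ?thesis using pd_add_psd[OF pdP2 psdQ] by (simp add: scaleR_add_right)
qed

lemma psd_le_trace:
  fixes M :: "real^'n^'n"
  assumes "psd M" shows "x \<bullet> (M *v x) \<le> trace M * (x \<bullet> x)"
proof -
  define q where "q = x \<bullet> (M *v x)"
  have q0: "0 \<le> q" using assms by (simp add: psd_def q_def)
  have tr0: "0 \<le> trace M" unfolding trace_def by (intro sum_nonneg psd_diag_nonneg[OF assms])
  have each: "\<And>i. \<bar>axis i 1 \<bullet> (M *v x)\<bar> \<le> sqrt (M$i$i) * sqrt q"
  proof -
    fix i
    have "(axis i 1 \<bullet> (M *v x))^2 \<le> M$i$i * q"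
      using psd_cs[OF assms, of "axis i 1" x] by (simp add: axis_quad q_def)
    then have "sqrt ((axis i 1 \<bullet> (M *v x))^2) \<le> sqrt (M$i$i * q)" by (rule real_sqrt_le_mono)
    then show "\<bar>axis i 1 \<bullet> (M *v x)\<bar> \<le> sqrt (M$i$i) * sqrt q" by (simp add: real_sqrt_mult)
  qed
  define a where "a = (\<chi> i. \<bar>x$i\<bar>)"
  define b where "b = (\<chi> i. sqrt (M$i$i))"
  have "q = (\<Sum>i\<in>UNIV. x$i * (axis i 1 \<bullet> (M *v x)))"
    by (simp add: q_def axis_inner) (simp add: inner_vec_def)
  also have "\<dots> \<le> (\<Sum>i\<in>UNIV. \<bar>x$i\<bar> * (sqrt (M$i$i) * sqrt q))"
  proof (rule sum_mono)
    fix i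
    have "x$i * (axis i 1 \<bullet> (M *v x)) \<le> \<bar>x$i\<bar> * \<bar>axis i 1 \<bullet> (M *v x)\<bar>" by (simp add: abs_mult[symmetric])
    also have "\<dots> \<le> \<bar>x$i\<bar> * (sqrt (M$i$i) * sqrt q)" by (rule mult_left_mono[OF each]) simp
    finally show "x$i * (axis i 1 \<bullet> (M *v x)) \<le> \<bar>x$i\<bar> * (sqrt (M$i$i) * sqrt q)" .
  qed
  also have "\<dots> = (a \<bullet> b) * sqrt q" by (simp add: a_def b_def inner_vec_def sum_distrib_right mult.assoc)
  finally have qab: "q \<le> (a \<bullet> b) * sqrt q" .
  have ab: "a \<bullet> b \<le> norm a * norm b" by (rule norm_cauchy_schwarz)
  have na: "(norm a)^2 = x \<bullet> x" by (simp add: power2_norm_eq_inner a_def inner_vec_def power2_eq_square[symmetric])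
  have nb: "(norm b)^2 = trace M"
    using psd_diag_nonneg[OF assms] by (simp add: power2_norm_eq_inner b_def inner_vec_def trace_def)
  show ?thesis
  proof (cases "q = 0")
    case True then show ?thesis using tr0 by (simp add: q_def)
  next
    case False
    then have sq: "0 < sqrt q" using q0 by simp
    have "sqrt q * sqrt q \<le> (a \<bullet> b) * sqrt q" using qab q0 by (simp add: real_sqrt_mult_self)
    then have "sqrt q \<le> a \<bullet> b" using sq by (rule mult_right_le_imp_le)
    then have "sqrt q \<le> norm a * norm b" using ab by linarith
    then have "(sqrt q)^2 \<le> (norm a * norm b)^2" using sq by (intro power_mono) auto
    then show ?thesis using q0 na nb by (simp add: power_mult_distrib q_def mult.commute)
  qed
qed

lemma trace_inv_bound:
  fixes W :: "real^'n^'n"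
  assumes "pos_def W"
  shows "x \<bullet> x \<le> trace (matrix_inv W) * (x \<bullet> (W *v x))"
proof (cases "x = 0")
  case True then show ?thesis by simp
next
  case False
  define v where "v = matrix_inv W *v x"
  have Wv: "W *v v = x" using inv_props(1)[OF pd_invertible[OF assms]] by (simp add: v_def matrix_vector_mul_assoc)
  have psdW: "psd W" by (rule pd_psd[OF assms])
  have psdWi: "psd (matrix_inv W)"
    unfolding psd_def using inv_sym[OF assms] pd_inv_quad_nonneg[OF assms] by (simp add: inner_commute)
  have "(x \<bullet> (W *v v))^2 \<le> (x \<bullet> (W *v x)) * (v \<bullet> (W *v v))" by (rule psd_cs[OF psdW])
  then have "(x \<bullet> x)^2 \<le> (x \<bullet> (W *v x)) * (x \<bullet> v)"
    by (simp add: Wv inner_commute)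
  then have "(x \<bullet> x)^2 \<le> (x \<bullet> (W *v x)) * (x \<bullet> (matrix_inv W *v x))"
    by (simp add: v_def)
  also have "\<dots> \<le> (x \<bullet> (W *v x)) * (trace (matrix_inv W) * (x \<bullet> x))"
    using psd_le_trace[OF psdWi, of x] psdW by (intro mult_left_mono) (auto simp: psd_def)
  finally have "(x \<bullet> x) * (x \<bullet> x) \<le> (trace (matrix_inv W) * (x \<bullet> (W *v x))) * (x \<bullet> x)"
    by (simp add: power2_eq_square algebra_simps)
  moreover have "0 < x \<bullet> x" using False by simp
  ultimately show ?thesis by simp
qed



lemma inv_entry:
  fixes X :: "real^'n^'n"
  assumes "invertible X"
  shows "matrix_inv X $ k $ j = det (\<chi> i l. if l = k then axis j 1 $ i else X$i$l) / det X"
proof -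
  have d: "det X \<noteq> 0" using assms invertible_det_nz by blast
  have "X *v (matrix_inv X *v axis j 1) = axis j 1"
    using inv_props(1)[OF assms] by (simp add: matrix_vector_mul_assoc)
  then have "matrix_inv X *v axis j 1 = (\<chi> k. det (\<chi> i l. if l = k then axis j 1 $ i else X$i$l) / det X)"
    by (rule cramer[OF d, THEN iffD1])
  then have "(matrix_inv X *v axis j 1) $ k = det (\<chi> i l. if l = k then axis j 1 $ i else X$i$l) / det X"
    by simp
  then show ?thesis by (simp only: mat_axis_comp)
qed

lemma trace_inv_formula:
  fixes X :: "real^'n^'n"
  assumes "invertible X"
  shows "trace (matrix_inv X) = (\<Sum>k\<in>UNIV. det (\<chi> i l. if l = k then axis k 1 $ i else X$i$l) / det X)"
  by (simp add: trace_def inv_entry[OF assms])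

lemma cont_replace:
  fixes F :: "'a::topological_space \<Rightarrow> real^'n^'n"
  assumes "continuous_on S F"
  shows "continuous_on S (\<lambda>p. (\<chi> i l. if l = k then v $ i else F p $ i $ l))"
proof (intro continuous_on_vec_lambda)
  fix i l
  show "continuous_on S (\<lambda>p. if l = k then v $ i else F p $ i $ l)"
    by (cases "l = k") (simp_all add: continuous_on_const continuous_on_component assms)
qed

lemma cont_Wp: "continuous_on S (\<lambda>p. Wp A p T)"
  unfolding Wp_def by (intro continuous_intros)

lemma simplex_compact: "compact (std_simplex :: (real^'n) set)"
proof -
  have cl: "closed (std_simplex :: (real^'n) set)"
  proof -
    have eq: "(std_simplex :: (real^'n) set) = {p. (\<Sum>i\<in>UNIV. p$i) = 1} \<inter> (\<Inter>i. {p. 0 \<le> p$i})"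
      by (auto simp: std_simplex_def)
    have c1: "closed {p::real^'n. (\<Sum>i\<in>UNIV. p$i) = 1}"
      by (rule closed_Collect_eq) (intro continuous_intros)+
    have c2: "\<And>i. closed {p::real^'n. 0 \<le> p$i}"
      by (rule closed_Collect_le) (intro continuous_intros)+
    show ?thesis unfolding eq using c1 c2 by (intro closed_Int closed_INT) auto
  qed
  have "bounded (std_simplex :: (real^'n) set)"
    unfolding bounded_iff
  proof (intro exI ballI)
    fix p :: "real^'n" assume p: "p \<in> std_simplex"
    have "norm p \<le> (\<Sum>i\<in>UNIV. \<bar>p$i\<bar>)" by (rule norm_le_l1_cart)
    also have "\<dots> = (\<Sum>i\<in>UNIV. p$i)" using p by (simp add: std_simplex_def)
    finally show "norm p \<le> 1" using p by (simp add: std_simplex_def)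
  qed
  then show ?thesis using cl compact_eq_bounded_closed by blast
qed

lemma simplex_mid:
  assumes "p \<in> std_simplex" "q \<in> std_simplex" shows "(1/2) *\<^sub>R (p + q) \<in> std_simplex"
proof -
  have "(\<Sum>i\<in>UNIV. ((1/2) *\<^sub>R (p + q))$i) = (1/2) * (\<Sum>i\<in>UNIV. p$i) + (1/2) * (\<Sum>i\<in>UNIV. q$i)"
    by (simp add: sum.distrib sum_distrib_left distrib_left)
  then show ?thesis using assms by (simp add: std_simplex_def)
qed



theorem lemma1:
  fixes A :: "real^'n^'n" and T :: real
  assumes "T > 0"
    and "\<And>x :: real^'n. Wp A x T = 0 \<Longrightarrow> x = 0"
  shows "(\<exists>!p. p \<in> XT A T \<inter> std_simplex \<and> (\<forall>q \<in> XT A T \<inter> std_simplex. fT A T p \<le> fT A T q))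
       \<and> (\<exists>!p. p \<in> XT A T \<inter> std_simplex \<and> (\<forall>q \<in> XT A T \<inter> std_simplex. gT A T p \<le> gT A T q))"
proof -
  define S where "S = XT A T \<inter> std_simplex"
  have inj: "\<And>p q. p \<noteq> q \<Longrightarrow> Wp A p T \<noteq> Wp A q T"
  proof
    fix p q :: "real^'n" assume "p \<noteq> q" "Wp A p T = Wp A q T"
    then have "Wp A (p - q) T = 0" by (simp add: Wp_diff)
    then have "p - q = 0" by (rule assms(2))
    then show False using \<open>p \<noteq> q\<close> by simp
  qed
  have Smid: "\<And>p q. p \<in> S \<Longrightarrow> q \<in> S \<Longrightarrow> (1/2) *\<^sub>R (p + q) \<in> S"
    using simplex_mid pd_mid by (auto simp: S_def XT_def Wp_mid)
  have Spd: "\<And>p. p \<in> S \<Longrightarrow> pos_def (Wp A p T)" by (simp add: S_def XT_def)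
  have p0S: "p0 \<in> S" unfolding S_def XT_def using p0_simplex p0_pd[OF assms(1), of A] by blast
  have Ssimp: "\<And>p. p \<in> S \<Longrightarrow> p \<in> std_simplex" by (simp add: S_def)
  have Sdet: "\<And>p. p \<in> S \<Longrightarrow> 0 < det (Wp A p T)" using Spd pd_det_pos by blast
  have fex: "\<exists>p\<in>S. \<forall>q\<in>S. fT A T p \<le> fT A T q"
  proof -
    define c where "c = fT A T p0"
    define K where "K = std_simplex \<inter> {p. exp (-c) \<le> det (Wp A p T)}"
    have Kc: "compact K"
      unfolding K_def
      by (intro compact_Int_closed simplex_compact closed_Collect_le continuous_on_const continuous_on_det cont_Wp)
    have KS: "K \<subseteq> S"
    proof
      fix p assume "p \<in> K"
      then have ps: "p \<in> std_simplex" and d: "exp (-c) \<le> det (Wp A p T)" by (auto simp: K_def)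
      have "0 < det (Wp A p T)" using d by (smt (verit) exp_gt_zero)
      then have "pos_def (Wp A p T)" by (intro psd_det_pd[OF psd_Wp[OF ps]]) simp
      then show "p \<in> S" using ps by (simp add: S_def XT_def)
    qed
    have p0K: "p0 \<in> K"
    proof -
      have "exp (-c) = det (Wp A p0 T)" using Sdet[OF p0S] by (simp add: c_def fT_def)
      then show ?thesis using p0_simplex by (simp add: K_def)
    qed
    have contK: "continuous_on K (fT A T)"
    proof -
      have "continuous_on K (\<lambda>p. - ln (det (Wp A p T)))"
        using KS Sdet by (intro continuous_intros continuous_on_det cont_Wp) (auto, fastforce)
      then show ?thesis by (simp add: fT_def[abs_def])
    qed
    obtain p where pK: "p \<in> K" and pmin: "\<forall>q\<in>K. fT A T p \<le> fT A T q"
      using continuous_attains_inf[OF Kc _ contK] p0K by blast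
    have "\<forall>q\<in>S. fT A T p \<le> fT A T q"
    proof
      fix q assume qS: "q \<in> S"
      show "fT A T p \<le> fT A T q"
      proof (cases "q \<in> K")
        case True then show ?thesis using pmin by blast
      next
        case False
        then have "det (Wp A q T) < exp (-c)" using Ssimp[OF qS] by (auto simp: K_def)
        then have "ln (det (Wp A q T)) < -c" using Sdet[OF qS] ln_less_cancel_iff[of "det (Wp A q T)" "exp (-c)"] by simp
        then have "c < fT A T q" by (simp add: fT_def)
        moreover have "fT A T p \<le> c" using pmin p0K by (simp add: c_def)
        ultimately show ?thesis by simp
      qed
    qed
    then show ?thesis using pK KS by blast
  qed
  have funiq: "\<And>p q. p \<in> S \<Longrightarrow> q \<in> S \<Longrightarrow> (\<forall>r\<in>S. fT A T p \<le> fT A T r) \<Longrightarrow> (\<forall>r\<in>S. fT A T q \<le> fT A T r) \<Longrightarrow> p = q"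
  proof (rule ccontr)
    fix p q assume pS: "p \<in> S" and qS: "q \<in> S" and pm: "\<forall>r\<in>S. fT A T p \<le> fT A T r"
      and qm: "\<forall>r\<in>S. fT A T q \<le> fT A T r" and ne: "p \<noteq> q"
    define m where "m = (1/2) *\<^sub>R (p + q)"
    have mS: "m \<in> S" using Smid[OF pS qS] by (simp add: m_def)
    have lt: "det (Wp A p T) * det (Wp A q T) < (det (Wp A m T))^2"
      using logdet_mid[OF Spd[OF pS] Spd[OF qS] inj[OF ne]] by (simp add: m_def Wp_mid)
    have dp: "0 < det (Wp A p T)" "0 < det (Wp A q T)" "0 < det (Wp A m T)"
      using Sdet pS qS mS by auto
    have "ln (det (Wp A p T) * det (Wp A q T)) < ln ((det (Wp A m T))^2)"
      using lt dp by simp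
    then have "ln (det (Wp A p T)) + ln (det (Wp A q T)) < 2 * ln (det (Wp A m T))"
      using dp by (simp add: ln_mult ln_realpow)
    then have "fT A T m < fT A T p \<or> fT A T m < fT A T q" unfolding fT_def by linarith
    then show False using pm qm mS by force
  qed
  have gex: "\<exists>p\<in>S. \<forall>q\<in>S. gT A T p \<le> gT A T q"
  proof -
    define c where "c = gT A T p0"
    define K where "K = std_simplex \<inter> (\<Inter>x. {p. x \<bullet> x \<le> c * (x \<bullet> (Wp A p T *v x))})"
    have quadc: "\<And>x. continuous_on UNIV (\<lambda>p. c * (x \<bullet> (Wp A p T *v x)))"
      unfolding Wp_quad by (intro continuous_intros)
    have Kc: "compact K"
    proof -
      have "\<And>x. closed {p. x \<bullet> x \<le> c * (x \<bullet> (Wp A p T *v x))}"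
        by (intro closed_Collect_le continuous_on_const quadc)
      then have "closed (\<Inter>x. {p. x \<bullet> x \<le> c * (x \<bullet> (Wp A p T *v x))})" by (intro closed_INT) auto
      then show ?thesis unfolding K_def by (intro compact_Int_closed simplex_compact)
    qed
    have KS: "K \<subseteq> S"
    proof
      fix p assume "p \<in> K"
      then have ps: "p \<in> std_simplex" and b: "\<And>x. x \<bullet> x \<le> c * (x \<bullet> (Wp A p T *v x))" by (auto simp: K_def)
      have psdW: "psd (Wp A p T)" by (rule psd_Wp[OF ps])
      have "pos_def (Wp A p T)"
        unfolding pos_def_def
      proof (intro conjI allI impI)
        show "transpose (Wp A p T) = Wp A p T" by (rule Wp_sym)
        fix x :: "real^'n" assume "x \<noteq> 0"
        then have "0 < c * (x \<bullet> (Wp A p T *v x))" using b[of x] by (smt (verit) inner_gt_zero_iff)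
        moreover have "0 \<le> x \<bullet> (Wp A p T *v x)" using psdW by (simp add: psd_def)
        ultimately show "0 < x \<bullet> (Wp A p T *v x)" by (metis le_less mult_zero_right order_less_irrefl)
      qed
      then show "p \<in> S" using ps by (simp add: S_def XT_def)
    qed
    have sub: "\<And>q. q \<in> S \<Longrightarrow> gT A T q \<le> c \<Longrightarrow> q \<in> K"
    proof -
      fix q assume qS: "q \<in> S" and gq: "gT A T q \<le> c"
      have "\<And>x. x \<bullet> x \<le> c * (x \<bullet> (Wp A q T *v x))"
      proof -
        fix x :: "real^'n"
        have "x \<bullet> x \<le> gT A T q * (x \<bullet> (Wp A q T *v x))"
          unfolding gT_def by (rule trace_inv_bound[OF Spd[OF qS]])
        also have "\<dots> \<le> c * (x \<bullet> (Wp A q T *v x))"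
          using gq pd_psd[OF Spd[OF qS]] by (intro mult_right_mono) (auto simp: psd_def)
        finally show "x \<bullet> x \<le> c * (x \<bullet> (Wp A q T *v x))" .
      qed
      then show "q \<in> K" using Ssimp[OF qS] by (simp add: K_def)
    qed
    have p0K: "p0 \<in> K" using sub[OF p0S] by (simp add: c_def)
    have contK: "continuous_on K (gT A T)"
    proof -
      have cs: "continuous_on K (\<lambda>p. \<Sum>k\<in>UNIV. det (\<chi> i l. if l = k then axis k 1 $ i else Wp A p T $i$l) / det (Wp A p T))"
      proof (rule continuous_on_sum)
        fix k :: 'n
        have c1: "continuous_on K (\<lambda>p. det (\<chi> i l. if l = k then axis k 1 $ i else Wp A p T $i$l))"
          by (intro continuous_on_det cont_replace cont_Wp)
        have c2: "continuous_on K (\<lambda>p. det (Wp A p T))" by (intro continuous_on_det cont_Wp)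
        show "continuous_on K (\<lambda>p. det (\<chi> i l. if l = k then axis k 1 $ i else Wp A p T $i$l) / det (Wp A p T))"
          using KS Sdet by (intro continuous_on_divide c1 c2) fastforce
      qed
      have eqs: "\<forall>p\<in>K. (\<Sum>k\<in>UNIV. det (\<chi> i l. if l = k then axis k 1 $ i else Wp A p T $i$l) / det (Wp A p T)) = gT A T p"
        using KS Spd by (auto simp: gT_def trace_inv_formula pd_invertible)
      show ?thesis by (rule continuous_on_eq[OF cs]) (use eqs in auto)
    qed
    obtain p where pK: "p \<in> K" and pmin: "\<forall>q\<in>K. gT A T p \<le> gT A T q"
      using continuous_attains_inf[OF Kc _ contK] p0K by blast
    have "\<forall>q\<in>S. gT A T p \<le> gT A T q"
    proof
      fix q assume qS: "q \<in> S"
      show "gT A T p \<le> gT A T q"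
      proof (cases "gT A T q \<le> c")
        case True then show ?thesis using pmin sub[OF qS] by blast
      next
        case False
        moreover have "gT A T p \<le> c" using pmin p0K by (simp add: c_def)
        ultimately show ?thesis by simp
      qed
    qed
    then show ?thesis using pK KS by blast
  qed
  have guniq: "\<And>p q. p \<in> S \<Longrightarrow> q \<in> S \<Longrightarrow> (\<forall>r\<in>S. gT A T p \<le> gT A T r) \<Longrightarrow> (\<forall>r\<in>S. gT A T q \<le> gT A T r) \<Longrightarrow> p = q"
  proof (rule ccontr)
    fix p q assume pS: "p \<in> S" and qS: "q \<in> S" and pm: "\<forall>r\<in>S. gT A T p \<le> gT A T r"
      and qm: "\<forall>r\<in>S. gT A T q \<le> gT A T r" and ne: "p \<noteq> q"
    define m where "m = (1/2) *\<^sub>R (p + q)"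
    have mS: "m \<in> S" using Smid[OF pS qS] by (simp add: m_def)
    have "2 * gT A T m < gT A T p + gT A T q"
      using trinv_mid[OF Spd[OF pS] Spd[OF qS] inj[OF ne]] by (simp add: m_def Wp_mid gT_def)
    then have "gT A T m < gT A T p \<or> gT A T m < gT A T q" by linarith
    then show False using pm qm mS by force
  qed
  show ?thesis
    unfolding S_def[symmetric]
  proof
    show "\<exists>!p. p \<in> S \<and> (\<forall>q\<in>S. fT A T p \<le> fT A T q)"
      using fex funiq by blast
    show "\<exists>!p. p \<in> S \<and> (\<forall>q\<in>S. gT A T p \<le> gT A T q)"
      using gex guniq by blast
  qed
qed



end
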